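(* Let $k\ge2$ be a constant integer, let $f(n)=o(\log\log n)$ with $f(n)\to\infty$, and let $m=\left\lceil f(n)\,n^{1-k/(k^2+k-1)}\right\rceil$. Consider the random $k$-tree process, enumerate the $k$-cliques of $G(m)$ as $C_1,\dots,C_{mk+1}$, and for each $j$ let the piece $H_j$ be the induced subgraph of $G(n)$ on the set of vertices $v$ such that every path in $G(n)$ from $v$ to a vertex of $G(m)$ intersects $V(C_j)$. Call a piece moderate if its number of vertices lies between $n/(mf(n))$ and $nf(n)/m$. Then with probability $1-o(1)$ the number of non-moderate pieces is $o(m)$.
   Context: Random $k$-tree process: $G(0)$ is a clique on $k$ vertices; for $t\ge1$, $G(t)$ is obtained from $G(t-1)$ by choosing a $k$-clique of $G(t-1)$ uniformly at random, creating a new vertex, and joining it to all vertices of the chosen clique; $G(m)$ is a subgraph of $G(n)$ and has $mk+1$ many $k$-cliques. *)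

theory Defs
  imports "HOL-Probability.Probability" "HOL-Library.Landau_Symbols"
begin

text \<open>A finite simple graph with natural-number vertices: vertex set and edge set,
  edges being two-element sets.\<close>
type_synonym graph = "nat set \<times> nat set set"

definition verts :: "graph \<Rightarrow> nat set" where "verts G = fst G"
definition edges :: "graph \<Rightarrow> nat set set" where "edges G = snd G"

definition kcliques :: "nat \<Rightarrow> graph \<Rightarrow> nat set set" where
  "kcliques k G = {C. C \<subseteq> verts G \<and> card C = k \<and>
     (\<forall>u\<in>C. \<forall>v\<in>C. u \<noteq> v \<longrightarrow> {u, v} \<in> edges G)}"

definition kclique0 :: "nat \<Rightarrow> graph" where
  "kclique0 k = ({0..<k}, {{u, v} | u v. u < k \<and> v < k \<and> u \<noteq> v})"

text \<open>Add a new vertex (labelled by the current number of vertices, i.e. its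
  arrival time plus k-1) joined to all vertices of the clique C.\<close>
definition add_vertex :: "graph \<Rightarrow> nat set \<Rightarrow> graph" where
  "add_vertex G C = (let x = card (verts G) in
     (insert x (verts G), edges G \<union> {{x, u} | u. u \<in> C}))"

fun ktree_process :: "nat \<Rightarrow> nat \<Rightarrow> graph pmf" where
  "ktree_process k 0 = return_pmf (kclique0 k)"
| "ktree_process k (Suc t) =
     bind_pmf (ktree_process k t) (\<lambda>G. map_pmf (add_vertex G) (pmf_of_set (kcliques k G)))"

text \<open>Since vertices are labelled by arrival time, G(m) is the subgraph of G(n)
  induced on the vertices 0,...,k+m-1 (later vertices only add edges incident to
  themselves).\<close>
definition initial_graph :: "nat \<Rightarrow> nat \<Rightarrow> graph \<Rightarrow> graph" where
  "initial_graph k m G = ({v \<in> verts G. v < k + m},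
                          {e \<in> edges G. \<forall>v\<in>e. v < k + m})"

definition is_path :: "graph \<Rightarrow> nat list \<Rightarrow> bool" where
  "is_path G ps \<longleftrightarrow> ps \<noteq> [] \<and> distinct ps \<and> set ps \<subseteq> verts G \<and>
     (\<forall>i. Suc i < length ps \<longrightarrow> {ps ! i, ps ! Suc i} \<in> edges G)"

definition piece :: "graph \<Rightarrow> nat set \<Rightarrow> nat set \<Rightarrow> nat set" where
  "piece G W C = {v \<in> verts G. \<forall>ps. is_path G ps \<and> hd ps = v \<and> last ps \<in> W
                                    \<longrightarrow> set ps \<inter> C \<noteq> {}}"

definition non_moderate_count ::
  "nat \<Rightarrow> (nat \<Rightarrow> real) \<Rightarrow> nat \<Rightarrow> nat \<Rightarrow> graph \<Rightarrow> nat" where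
  "non_moderate_count k f n m G =
     card {C \<in> kcliques k (initial_graph k m G).
        \<not> (real n / (real m * f n) \<le> real (card (piece G (verts (initial_graph k m G)) C))
           \<and> real (card (piece G (verts (initial_graph k m G)) C)) \<le> real n * f n / real m)}"

end

theory Submission
  imports Defs "HOL-Analysis.Gamma_Function"
begin



lemma is_path_alt: "is_path G ps \<longleftrightarrow> ps \<noteq> [] \<and> distinct ps \<and> set ps \<subseteq> verts G \<and>
   successively (\<lambda>u v. {u, v} \<in> edges G) ps"
  unfolding is_path_def successively_conv_nth by blast

lemma verts_add: "verts (add_vertex G C) = insert (card (verts G)) (verts G)"
  by (simp add: add_vertex_def verts_def Let_def)
lemma edges_add: "edges (add_vertex G C) = edges G \<union> {{card (verts G), u} | u. u \<in> C}"
  by (simp add: add_vertex_def verts_def edges_def Let_def)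

definition clq :: "graph \<Rightarrow> nat set \<Rightarrow> bool" where
  "clq G D \<longleftrightarrow> (\<forall>u\<in>D. \<forall>v\<in>D. u \<noteq> v \<longrightarrow> {u, v} \<in> edges G)"

lemma kcl_D: "D \<in> kcliques k G \<Longrightarrow> D \<subseteq> verts G \<and> card D = k \<and> clq G D"
  unfolding kcliques_def clq_def by auto

locale addv =
  fixes G :: graph and D :: "nat set" and N :: nat
  assumes vG: "verts G = {0..<N}"
    and eG: "\<And>e. e \<in> edges G \<Longrightarrow> e \<subseteq> verts G"
    and DG: "D \<subseteq> verts G" and Dne: "D \<noteq> {}" and Dc: "clq G D"
begin

abbreviation "G' \<equiv> add_vertex G D"

lemma x_eq: "card (verts G) = N" by (simp add: vG)

lemma vG': "verts G' = insert N (verts G)" by (simp add: verts_add x_eq)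
lemma eG': "edges G' = edges G \<union> {{N, u} | u. u \<in> D}" by (simp add: edges_add x_eq)

lemma N_notin: "N \<notin> verts G" by (simp add: vG)

lemma edge_N: "{N, v} \<in> edges G' \<Longrightarrow> v \<noteq> N \<Longrightarrow> v \<in> D"
  using eG N_notin unfolding eG' by (auto simp: doubleton_eq_iff)

lemma path_mono: "is_path G ps \<Longrightarrow> is_path G' ps"
  unfolding is_path_alt using vG' eG'
  by (auto elim: successively_mono)

lemma path_back: "is_path G' ps \<Longrightarrow> N \<notin> set ps \<Longrightarrow> is_path G ps"
  unfolding is_path_alt
proof (elim conjE, intro conjI)
  assume a: "successively (\<lambda>u v. {u, v} \<in> edges G') ps" "N \<notin> set ps" "set ps \<subseteq> verts G'"
  show "set ps \<subseteq> verts G" using a vG' by auto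
  have "successively (\<lambda>u v. {u, v} \<in> edges G) ps \<longleftrightarrow> successively (\<lambda>u v. {u, v} \<in> edges G') ps"
    apply (rule successively_cong)
    using a(2) unfolding eG' by (auto simp: doubleton_eq_iff)
  then show "successively (\<lambda>u v. {u, v} \<in> edges G) ps" using a by simp
qed auto

lemma path_shortcut:
  assumes p: "is_path G' ps" and hN: "hd ps \<noteq> N" and lN: "last ps \<noteq> N"
  shows "\<exists>qs. is_path G qs \<and> hd qs = hd ps \<and> last qs = last ps \<and> set qs \<subseteq> set ps"
proof (cases "N \<in> set ps")
  case False then show ?thesis using path_back p by blast
next
  case True
  then obtain as bs where ps: "ps = as @ N # bs" using split_list[OF True] by blast
  have "as \<noteq> []" using hN ps by auto
  then obtain as' a where as: "as = as' @ [a]" by (metis append_butlast_last_id)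
  have "bs \<noteq> []" using lN ps by auto
  then obtain b bs' where bs: "bs = b # bs'" by (metis list.exhaust)
  have p': "ps = as' @ [a, N, b] @ bs'" using ps as bs by simp
  from p have d: "distinct ps" and sp: "successively (\<lambda>u v. {u, v} \<in> edges G') ps"
    and sv: "set ps \<subseteq> verts G'"
    unfolding is_path_alt by auto
  have e1: "{a, N} \<in> edges G'" and e2: "{N, b} \<in> edges G'"
    using sp unfolding p' by (simp_all add: successively_append_iff)
  have aN: "a \<noteq> N" and bN: "b \<noteq> N" and ab: "a \<noteq> b" using d unfolding p' by auto
  have aD: "a \<in> D" using edge_N[of a] e1 aN by (simp add: insert_commute)
  have bD: "b \<in> D" using edge_N[of b] e2 bN by simp
  have eab: "{a, b} \<in> edges G" using Dc aD bD ab unfolding clq_def by auto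
  define qs where "qs = as' @ [a, b] @ bs'"
  have "N \<notin> set qs" using d unfolding p' qs_def by auto
  moreover have "is_path G' qs"
    unfolding is_path_alt
  proof (intro conjI)
    show "qs \<noteq> []" by (simp add: qs_def)
    show "distinct qs" using d unfolding p' qs_def by auto
    show "set qs \<subseteq> verts G'" using sv unfolding p' qs_def by auto
    show "successively (\<lambda>u v. {u, v} \<in> edges G') qs"
      using sp eab unfolding p' qs_def eG'
      by (auto simp: successively_append_iff)
  qed
  ultimately have "is_path G qs" using path_back by blast
  moreover have "hd qs = hd ps" "last qs = last ps"
    unfolding qs_def p' by (simp_all add: hd_append last_append)
  moreover have "set qs \<subseteq> set ps" unfolding qs_def p' by auto
  ultimately show ?thesis by blast
qed

lemma piece_add:
  assumes W: "W \<subseteq> verts G" and C: "C \<subseteq> verts G"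
  shows "piece G' W C = piece G W C \<union> (if D \<subseteq> piece G W C then {N} else {})"
proof -
  have old: "v \<in> piece G' W C \<longleftrightarrow> v \<in> piece G W C" if v: "v \<in> verts G" for v
  proof
    assume "v \<in> piece G' W C"
    then show "v \<in> piece G W C" using v path_mono unfolding piece_def by auto
  next
    assume a: "v \<in> piece G W C"
    show "v \<in> piece G' W C" unfolding piece_def
    proof (safe)
      show "v \<in> verts G'" using v vG' by auto
    next
      fix ps assume p: "is_path G' ps" "last ps \<in> W" "v = hd ps" "set ps \<inter> C = {}"
      have "hd ps \<noteq> N" "last ps \<noteq> N" using p v W N_notin by auto
      then obtain qs where "is_path G qs" "hd qs = hd ps" "last qs = last ps" "set qs \<subseteq> set ps"
        using path_shortcut p(1) by blast
      moreover have "set qs \<inter> C = {}" using \<open>set qs \<subseteq> set ps\<close> p(4) by blast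
      moreover have "\<forall>ps. is_path G ps \<and> hd ps = v \<and> last ps \<in> W \<longrightarrow> set ps \<inter> C \<noteq> {}"
        using a unfolding piece_def by blast
      ultimately show False using p(2,3) by metis
    qed
  qed
  have new: "N \<in> piece G' W C \<longleftrightarrow> D \<subseteq> piece G W C"
  proof
    assume a: "N \<in> piece G' W C"
    show "D \<subseteq> piece G W C"
    proof
      fix d assume d: "d \<in> D"
      show "d \<in> piece G W C" unfolding piece_def
      proof safe
        show "d \<in> verts G" using d DG by auto
      next
        fix ps assume p: "is_path G ps" "last ps \<in> W" "d = hd ps" "set ps \<inter> C = {}"
        have Nps: "N \<notin> set ps" using p(1) N_notin unfolding is_path_alt by auto
        have "is_path G' (N # ps)"
          using path_mono[OF p(1)] Nps d p(3) vG' eG' unfolding is_path_alt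
          by (cases ps) auto
        moreover have "last (N # ps) \<in> W" using p(1,2) by (auto simp: is_path_alt)
        moreover have "set (N # ps) \<inter> C = {}" using p(4) C N_notin by auto
        moreover have "\<forall>ps. is_path G' ps \<and> hd ps = N \<and> last ps \<in> W \<longrightarrow> set ps \<inter> C \<noteq> {}"
          using a unfolding piece_def by blast
        ultimately show False by (metis list.sel(1))
      qed
    qed
  next
    assume a: "D \<subseteq> piece G W C"
    show "N \<in> piece G' W C" unfolding piece_def
    proof safe
      show "N \<in> verts G'" using vG' by auto
    next
      fix ps assume p: "is_path G' ps" "last ps \<in> W" "N = hd ps" "set ps \<inter> C = {}"
      have "ps \<noteq> []" using p(1) unfolding is_path_def by simp
      then obtain rs where ps: "ps = N # rs" using p(3) by (metis list.collapse)
      have "rs \<noteq> []" using ps p(2) W N_notin by auto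
      then obtain d rs' where rs: "rs = d # rs'" by (cases rs) auto
      have pp: "is_path G' rs" and e: "{N, d} \<in> edges G'" and dN: "d \<noteq> N" and Nrs: "N \<notin> set rs"
        using p(1) unfolding ps rs is_path_alt by (simp_all add: successively_Cons)
      have dD: "d \<in> D" using edge_N e dN by blast
      have "is_path G rs" using path_back pp Nrs by blast
      moreover have "last rs \<in> W" using p(2) unfolding ps rs by simp
      moreover have "set rs \<inter> C = {}" using p(4) unfolding ps by auto
      moreover have "d \<in> piece G W C" using a dD by blast
      moreover have "\<forall>ps. is_path G ps \<and> hd ps = d \<and> last ps \<in> W \<longrightarrow> set ps \<inter> C \<noteq> {}"
        using \<open>d \<in> piece G W C\<close> unfolding piece_def by blast
      ultimately show False unfolding rs by (metis list.sel(1))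
    qed
  qed
  have sub: "piece G' W C \<subseteq> verts G'" "piece G W C \<subseteq> verts G" unfolding piece_def by blast+
  show ?thesis
  proof (rule set_eqI)
    fix v
    show "v \<in> piece G' W C \<longleftrightarrow> v \<in> piece G W C \<union> (if D \<subseteq> piece G W C then {N} else {})"
    proof (cases "v = N")
      case True then show ?thesis using new N_notin sub by auto
    next
      case False
      then have "v \<in> piece G' W C \<longleftrightarrow> v \<in> piece G W C"
      proof (cases "v \<in> verts G")
        case True then show ?thesis using old by blast
      next
        case F: False
        then have "v \<notin> verts G'" using False vG' by simp
        then show ?thesis using sub F by blast
      qed
      then show ?thesis using False by simp
    qed
  qed
qed


lemma kcliques_add:
  assumes D: "D \<in> kcliques k G" and k: "k \<ge> 1"
  shows "kcliques k G' = kcliques k G \<union> (\<lambda>u. insert N (D - {u})) ` D"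
proof (rule set_eqI, rule iffI)
  fix Q assume Q: "Q \<in> kcliques k G'"
  have Qv: "Q \<subseteq> insert N (verts G)" and cQ: "card Q = k"
    and Qe: "\<And>u v. u \<in> Q \<Longrightarrow> v \<in> Q \<Longrightarrow> u \<noteq> v \<Longrightarrow> {u, v} \<in> edges G'"
    using Q unfolding kcliques_def vG' by auto
  show "Q \<in> kcliques k G \<union> (\<lambda>u. insert N (D - {u})) ` D"
  proof (cases "N \<in> Q")
    case False
    have "Q \<subseteq> verts G" using Qv False by auto
    moreover have "{u, v} \<in> edges G" if "u \<in> Q" "v \<in> Q" "u \<noteq> v" for u v
    proof -
      have "{u, v} \<in> edges G'" using Qe that by auto
      moreover have "{u, v} \<noteq> {N, w}" for w using False that by (auto simp: doubleton_eq_iff)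
      ultimately show ?thesis unfolding eG' by auto
    qed
    ultimately show ?thesis using cQ unfolding kcliques_def by auto
  next
    case True
    have sub: "Q - {N} \<subseteq> D"
    proof
      fix v assume v: "v \<in> Q - {N}"
      then have "{N, v} \<in> edges G'" using Qe True by auto
      then show "v \<in> D" using edge_N v by auto
    qed
    have fD: "finite D" "card D = k" using D k kcl_D[OF D] by (auto intro: card_ge_0_finite)
    have fQ: "finite Q" using cQ k by (auto intro: card_ge_0_finite)
    have cQ': "card (Q - {N}) = k - 1" using cQ True fQ by simp
    have "card (D - (Q - {N})) = 1"
      using card_Diff_subset[OF finite_subset[OF sub fD(1)] sub] fD cQ' k by simp
    then obtain u where u: "D - (Q - {N}) = {u}" by (meson card_1_singletonE)
    have "Q - {N} = D - {u}" using u sub by blast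
    then have "Q = insert N (D - {u})" using True by blast
    moreover have "u \<in> D" using u by blast
    ultimately show ?thesis by blast
  qed
next
  fix Q assume "Q \<in> kcliques k G \<union> (\<lambda>u. insert N (D - {u})) ` D"
  then show "Q \<in> kcliques k G'"
  proof
    assume "Q \<in> kcliques k G"
    then show ?thesis unfolding kcliques_def vG' eG' by auto
  next
    assume "Q \<in> (\<lambda>u. insert N (D - {u})) ` D"
    then obtain u where u: "u \<in> D" and Qd: "Q = insert N (D - {u})" by blast
    have fD: "finite D" "card D = k" "D \<subseteq> verts G" using D k kcl_D[OF D] by (auto intro: card_ge_0_finite)
    have "N \<notin> D" using fD N_notin by auto
    then have "card Q = k" using Qd fD u k by (simp add: card_insert_if)
    moreover have "Q \<subseteq> verts G'" using Qd fD vG' by auto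
    moreover have "{a, b} \<in> edges G'" if ab: "a \<in> Q" "b \<in> Q" "a \<noteq> b" for a b
    proof -
      consider "a = N" "b \<in> D" | "b = N" "a \<in> D" | "a \<in> D" "b \<in> D"
        using ab Qd by auto
      then show ?thesis
      proof cases
        case 1 then show ?thesis unfolding eG' by auto
      next
        case 2 then show ?thesis unfolding eG' by (auto simp: insert_commute)
      next
        case 3 then show ?thesis using Dc ab unfolding clq_def eG' by auto
      qed
    qed
    ultimately show ?thesis unfolding kcliques_def by auto
  qed
qed

lemma card_kcliques_add:
  assumes D: "D \<in> kcliques k G" and k: "k \<ge> 1" and fin: "finite (kcliques k G)"
  shows "card (kcliques k G') = card (kcliques k G) + k"
proof -
  have fD: "finite D" "card D = k" "D \<subseteq> verts G" using D k kcl_D[OF D] by (auto intro: card_ge_0_finite)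
  have ND: "N \<notin> D" using fD N_notin by auto
  have inj: "inj_on (\<lambda>u. insert N (D - {u})) D"
  proof (rule inj_onI)
    fix u v assume "u \<in> D" "v \<in> D" "insert N (D - {u}) = insert N (D - {v})"
    then have "D - {u} = D - {v}" using ND by (metis Diff_iff insert_Diff1 insert_absorb2 insert_Diff_single
        singletonI insert_ident)
    then show "u = v" using \<open>u \<in> D\<close> by blast
  qed
  have disj: "kcliques k G \<inter> (\<lambda>u. insert N (D - {u})) ` D = {}"
    using N_notin unfolding kcliques_def by auto
  show ?thesis
    unfolding kcliques_add[OF D k]
    using card_Un_disjoint[OF fin _ disj] card_image[OF inj] fD by simp
qed

end

lemma finite_kcliques: "finite (verts G) \<Longrightarrow> finite (kcliques k G)"
  unfolding kcliques_def by (rule finite_subset[of _ "Pow (verts G)"]) auto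

definition wf :: "nat \<Rightarrow> nat \<Rightarrow> graph \<Rightarrow> bool" where
  "wf k t G \<longleftrightarrow> verts G = {0..<k+t} \<and> (\<forall>e\<in>edges G. e \<subseteq> verts G) \<and>
      card (kcliques k G) = 1 + k * t"

lemma kcliques0: "k \<ge> 1 \<Longrightarrow> kcliques k (kclique0 k) = {{0..<k}}"
proof (rule set_eqI, rule iffI)
  fix Q assume "Q \<in> kcliques k (kclique0 k)"
  then have "Q \<subseteq> {0..<k}" "card Q = k" unfolding kcliques_def kclique0_def verts_def by auto
  then show "Q \<in> {{0..<k}}" using card_subset_eq[of "{0..<k}" Q] by auto
next
  fix Q assume "Q \<in> {{0..<k::nat}}"
  then show "Q \<in> kcliques k (kclique0 k)"
    unfolding kcliques_def kclique0_def verts_def edges_def by (auto; blast)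
qed

lemma wf_add:
  assumes w: "wf k t G" and D: "D \<in> kcliques k G" and k: "k \<ge> 1"
  shows "wf k (Suc t) (add_vertex G D)"
proof -
  interpret addv G D "k+t"
    using w D k kcl_D[OF D] unfolding wf_def by unfold_locales auto
  have fin: "finite (kcliques k G)" using w finite_kcliques unfolding wf_def by auto
  show ?thesis unfolding wf_def
  proof (intro conjI)
    show "verts G' = {0..<k + Suc t}" using vG' w unfolding wf_def by auto
    show "\<forall>e\<in>edges G'. e \<subseteq> verts G'" using w DG unfolding wf_def eG' vG' by auto
    show "card (kcliques k G') = 1 + k * Suc t"
      using card_kcliques_add[OF D k fin] w unfolding wf_def by simp
  qed
qed

lemma supp_wf: "k \<ge> 1 \<Longrightarrow> G \<in> set_pmf (ktree_process k t) \<Longrightarrow> wf k t G"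
proof (induction t arbitrary: G)
  case 0
  have G: "G = kclique0 k" using 0 by simp
  have c: "card (kcliques k (kclique0 k)) = 1" using kcliques0[OF 0(1)] by simp
  have v: "verts (kclique0 k) = {0..<k}" by (simp add: kclique0_def verts_def)
  have e: "\<forall>e\<in>edges (kclique0 k). e \<subseteq> {0..<k}" by (auto simp: kclique0_def edges_def)
  show ?case unfolding wf_def G using c v e by simp
next
  case (Suc t)
  from Suc.prems obtain G0 D where G0: "G0 \<in> set_pmf (ktree_process k t)"
    and D: "D \<in> set_pmf (pmf_of_set (kcliques k G0))" and G: "G = add_vertex G0 D" by auto
  have w: "wf k t G0" using Suc.IH G0 Suc.prems by auto
  have "finite (kcliques k G0)" "kcliques k G0 \<noteq> {}"
    using w finite_kcliques unfolding wf_def by auto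
  then have "D \<in> kcliques k G0" using D by simp
  then show ?case using wf_add w Suc.prems G by blast
qed

lemma supp_fin: "k \<ge> 1 \<Longrightarrow> finite (set_pmf (ktree_process k t))"
proof (induction t)
  case 0 then show ?case by simp
next
  case (Suc t)
  have "finite (set_pmf (pmf_of_set (kcliques k G)))" if "G \<in> set_pmf (ktree_process k t)" for G
  proof -
    have "finite (kcliques k G)" "kcliques k G \<noteq> {}"
      using supp_wf[OF Suc.prems that] finite_kcliques unfolding wf_def by auto
    then show ?thesis by simp
  qed
  then show ?case using Suc by auto
qed




lemma exp_bind:
  fixes f :: "'b \<Rightarrow> real"
  assumes fp: "finite (set_pmf p)" and fq: "\<And>x. x \<in> set_pmf p \<Longrightarrow> finite (set_pmf (q x))"
    and nn: "\<And>x y. x \<in> set_pmf p \<Longrightarrow> y \<in> set_pmf (q x) \<Longrightarrow> f y \<ge> 0"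
  shows "measure_pmf.expectation (bind_pmf p q) f =
         measure_pmf.expectation p (\<lambda>x. measure_pmf.expectation (q x) f)"
proof -
  have fb: "finite (set_pmf (bind_pmf p q))" using fp fq by simp
  have nn1: "0 \<le> measure_pmf.expectation (bind_pmf p q) f"
    by (rule integral_nonneg_AE) (use nn in \<open>auto simp: AE_measure_pmf_iff\<close>)
  have nnq: "0 \<le> measure_pmf.expectation (q x) f" if "x \<in> set_pmf p" for x
    by (rule integral_nonneg_AE) (use nn that in \<open>auto simp: AE_measure_pmf_iff\<close>)
  have nn2: "0 \<le> measure_pmf.expectation p (\<lambda>x. measure_pmf.expectation (q x) f)"
    by (rule integral_nonneg_AE) (use nnq in \<open>auto simp: AE_measure_pmf_iff\<close>)
  have "ennreal (measure_pmf.expectation (bind_pmf p q) f) = (\<integral>\<^sup>+y. ennreal (f y) \<partial>bind_pmf p q)"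
    by (rule nn_integral_eq_integral[symmetric])
       (use fb nn in \<open>auto simp: AE_measure_pmf_iff integrable_measure_pmf_finite\<close>)
  also have "\<dots> = (\<integral>\<^sup>+x. \<integral>\<^sup>+y. ennreal (f y) \<partial>q x \<partial>p)" by simp
  also have "\<dots> = (\<integral>\<^sup>+x. ennreal (measure_pmf.expectation (q x) f) \<partial>p)"
  proof (rule nn_integral_cong_AE)
    show "AE x in measure_pmf p. (\<integral>\<^sup>+y. ennreal (f y) \<partial>q x) = ennreal (measure_pmf.expectation (q x) f)"
      unfolding AE_measure_pmf_iff
    proof
      fix x assume x: "x \<in> set_pmf p"
      show "(\<integral>\<^sup>+y. ennreal (f y) \<partial>q x) = ennreal (measure_pmf.expectation (q x) f)"
        by (rule nn_integral_eq_integral)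
           (use fq[OF x] nn[OF x] in \<open>auto simp: AE_measure_pmf_iff integrable_measure_pmf_finite\<close>)
    qed
  qed
  also have "\<dots> = ennreal (measure_pmf.expectation p (\<lambda>x. measure_pmf.expectation (q x) f))"
    by (rule nn_integral_eq_integral)
       (use fp nnq in \<open>auto simp: AE_measure_pmf_iff integrable_measure_pmf_finite\<close>)
  finally show ?thesis using nn1 nn2 by simp
qed

lemma exp_step:
  fixes F H :: "graph \<Rightarrow> real"
  assumes k: "k \<ge> 1"
    and nn: "\<And>G. G \<in> set_pmf (ktree_process k (Suc t)) \<Longrightarrow> F G \<ge> 0"
    and st: "\<And>G. G \<in> set_pmf (ktree_process k t) \<Longrightarrow>
         (\<Sum>D\<in>kcliques k G. F (add_vertex G D)) / real (card (kcliques k G)) = c * H G"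
  shows "measure_pmf.expectation (ktree_process k (Suc t)) F =
         c * measure_pmf.expectation (ktree_process k t) H"
proof -
  let ?p = "ktree_process k t"
  let ?q = "\<lambda>G. map_pmf (add_vertex G) (pmf_of_set (kcliques k G))"
  have S: "finite (kcliques k G)" "kcliques k G \<noteq> {}" if "G \<in> set_pmf ?p" for G
    using supp_wf[OF k that] finite_kcliques unfolding wf_def by auto
  have "measure_pmf.expectation (ktree_process k (Suc t)) F =
        measure_pmf.expectation ?p (\<lambda>G. measure_pmf.expectation (?q G) F)"
    unfolding ktree_process.simps
  proof (rule exp_bind)
    show "finite (set_pmf ?p)" using supp_fin[OF k] .
    show "finite (set_pmf (?q G))" if "G \<in> set_pmf ?p" for G using S[OF that] by simp
    show "F y \<ge> 0" if "G \<in> set_pmf ?p" "y \<in> set_pmf (?q G)" for G y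
      by (rule nn) (use that in auto)
  qed
  also have "\<dots> = measure_pmf.expectation ?p (\<lambda>G. c * H G)"
  proof (rule integral_cong_AE)
    show "AE G in measure_pmf ?p. measure_pmf.expectation (?q G) F = c * H G"
      unfolding AE_measure_pmf_iff
    proof
      fix G assume G: "G \<in> set_pmf ?p"
      have "measure_pmf.expectation (?q G) F =
            measure_pmf.expectation (pmf_of_set (kcliques k G)) (\<lambda>D. F (add_vertex G D))"
        by simp
      also have "\<dots> = (\<Sum>D\<in>kcliques k G. F (add_vertex G D)) / real (card (kcliques k G))"
        using S[OF G] by (simp add: integral_pmf_of_set)
      finally show "measure_pmf.expectation (?q G) F = c * H G" using st[OF G] by simp
    qed
  qed simp_all
  also have "\<dots> = c * measure_pmf.expectation ?p H" by simp
  finally show ?thesis .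
qed

definition pc :: "nat \<Rightarrow> nat \<Rightarrow> nat set \<Rightarrow> graph \<Rightarrow> nat set" where
  "pc k m C G = piece G {0..<k+m} C"
definition cnt :: "nat \<Rightarrow> nat \<Rightarrow> nat set \<Rightarrow> graph \<Rightarrow> nat" where
  "cnt k m C G = card {Q \<in> kcliques k G. Q \<subseteq> pc k m C G}"
definition Q0 :: "nat \<Rightarrow> nat \<Rightarrow> graph \<Rightarrow> nat set set" where
  "Q0 k m G = kcliques k (initial_graph k m G)"

lemma initial_self: "wf k m G \<Longrightarrow> initial_graph k m G = G"
  unfolding wf_def initial_graph_def verts_def edges_def
  by (cases G) fastforce

lemma initial_add:
  assumes "wf k t G" "m \<le> t"
  shows "initial_graph k m (add_vertex G D) = initial_graph k m G"
proof -
  have "card (verts G) = k + t" using assms unfolding wf_def by simp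
  then show ?thesis using assms(2)
    unfolding initial_graph_def verts_add edges_add by auto
qed

lemma verts_initial: "wf k t G \<Longrightarrow> m \<le> t \<Longrightarrow> verts (initial_graph k m G) = {0..<k+m}"
  unfolding wf_def initial_graph_def verts_def by auto

lemma Q0_sub: "wf k t G \<Longrightarrow> m \<le> t \<Longrightarrow> C \<in> Q0 k m G \<Longrightarrow> C \<subseteq> {0..<k+m}"
  unfolding Q0_def kcliques_def using verts_initial by blast

lemma Q0_add: "wf k t G \<Longrightarrow> m \<le> t \<Longrightarrow> Q0 k m (add_vertex G D) = Q0 k m G"
  unfolding Q0_def using initial_add by metis

lemma Q0_fin: "wf k t G \<Longrightarrow> m \<le> t \<Longrightarrow> finite (Q0 k m G)"
  unfolding Q0_def using verts_initial finite_kcliques by (metis finite_atLeastLessThan)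

lemma pc_base:
  assumes w: "wf k m G" and C: "C \<in> kcliques k G"
  shows "pc k m C G = C"
proof -
  have vG: "verts G = {0..<k+m}" using w unfolding wf_def by simp
  have Cv: "C \<subseteq> verts G" using C unfolding kcliques_def by auto
  show ?thesis unfolding pc_def
  proof (rule set_eqI, rule iffI)
    fix v assume v: "v \<in> piece G {0..<k+m} C"
    then have "v \<in> verts G" unfolding piece_def by blast
    moreover have "is_path G [v]" using \<open>v \<in> verts G\<close> unfolding is_path_def by simp
    ultimately show "v \<in> C" using v vG unfolding piece_def by force
  next
    fix v assume "v \<in> C"
    then show "v \<in> piece G {0..<k+m} C" using Cv unfolding piece_def
      by (auto simp: is_path_def hd_in_set dest: hd_in_set)
  qed
qed

definition INV :: "nat \<Rightarrow> nat \<Rightarrow> graph \<Rightarrow> bool" where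
  "INV k m G \<longleftrightarrow> (\<forall>C\<in>Q0 k m G. cnt k m C G \<ge> 1 \<and> k * card (pc k m C G) + 1 = cnt k m C G + k * k)"

lemma step_facts:
  assumes w: "wf k t G" and mt: "m \<le> t" and D: "D \<in> kcliques k G" and k: "k \<ge> 1"
    and C: "C \<in> Q0 k m G"
  shows "pc k m C (add_vertex G D) = pc k m C G \<union> (if D \<subseteq> pc k m C G then {k+t} else {})"
    and "cnt k m C (add_vertex G D) = cnt k m C G + (if D \<subseteq> pc k m C G then k else 0)"
    and "k + t \<notin> pc k m C G" "finite (pc k m C G)"
proof -
  interpret addv G D "k+t"
    using w D k kcl_D[OF D] unfolding wf_def by unfold_locales auto
  have vG: "verts G = {0..<k+t}" using w unfolding wf_def by simp
  have Cs: "C \<subseteq> verts G" using Q0_sub[OF w mt C] vG mt by auto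
  show P: "pc k m C G' = pc k m C G \<union> (if D \<subseteq> pc k m C G then {k+t} else {})"
    unfolding pc_def by (rule piece_add) (use vG mt Cs in auto)
  have Pv: "pc k m C G \<subseteq> verts G" unfolding pc_def piece_def by blast
  then show Nn: "k + t \<notin> pc k m C G" using vG by auto
  show "finite (pc k m C G)" using Pv vG finite_subset by auto
  let ?P = "pc k m C G"
  let ?new = "(\<lambda>u. insert (k+t) (D - {u})) ` D"
  have fD: "finite D" "card D = k" "D \<subseteq> verts G" using D k kcl_D[OF D] by (auto intro: card_ge_0_finite)
  have ND: "k+t \<notin> D" using fD N_notin by auto
  have inj: "inj_on (\<lambda>u. insert (k+t) (D - {u})) D"
  proof (rule inj_onI)
    fix u v assume uv: "u \<in> D" "v \<in> D" "insert (k+t) (D - {u}) = insert (k+t) (D - {v})"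
    then have "D - {u} = D - {v}" using ND by (metis Diff_iff insert_Diff1 insert_absorb2 insert_Diff_single
        singletonI insert_ident)
    then show "u = v" using uv by blast
  qed
  have fin: "finite (kcliques k G)" using w finite_kcliques unfolding wf_def by auto
  have disj: "kcliques k G \<inter> ?new = {}"
    using N_notin unfolding kcliques_def by auto
  have eq: "{Q \<in> kcliques k G'. Q \<subseteq> pc k m C G'} =
            {Q \<in> kcliques k G. Q \<subseteq> ?P} \<union> (if D \<subseteq> ?P then ?new else {})"
  proof -
    have old: "Q \<subseteq> pc k m C G' \<longleftrightarrow> Q \<subseteq> ?P" if "Q \<in> kcliques k G" for Q
    proof -
      have "k + t \<notin> Q" using that N_notin unfolding kcliques_def by auto
      then show ?thesis unfolding P by auto
    qed
    have new: "Q \<subseteq> pc k m C G' \<longleftrightarrow> D \<subseteq> ?P" if Qn: "Q \<in> ?new" for Q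
    proof -
      obtain u where u: "u \<in> D" "Q = insert (k+t) (D - {u})" using Qn by blast
      show ?thesis
      proof (cases "D \<subseteq> ?P")
        case True then show ?thesis unfolding P u by auto
      next
        case False then show ?thesis unfolding P u using Nn by auto
      qed
    qed
    show ?thesis unfolding kcliques_add[OF D k] using old new by auto
  qed
  have fP: "finite {Q \<in> kcliques k G. Q \<subseteq> ?P}" using fin by auto
  show "cnt k m C G' = cnt k m C G + (if D \<subseteq> ?P then k else 0)"
  proof (cases "D \<subseteq> ?P")
    case True
    have "card ({Q \<in> kcliques k G. Q \<subseteq> ?P} \<union> ?new) = card {Q \<in> kcliques k G. Q \<subseteq> ?P} + card ?new"
      by (rule card_Un_disjoint) (use fP fD disj in auto)
    then show ?thesis unfolding cnt_def eq using True card_image[OF inj] fD by simp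
  next
    case False then show ?thesis unfolding cnt_def eq by simp
  qed
qed

lemma supp_INV:
  assumes k: "k \<ge> 1"
  shows "G \<in> set_pmf (ktree_process k (m + d)) \<Longrightarrow> INV k m G"
proof (induction d arbitrary: G)
  case 0
  then have w: "wf k m G" using supp_wf[OF k] by simp
  have Q: "Q0 k m G = kcliques k G" unfolding Q0_def initial_self[OF w] ..
  show ?case unfolding INV_def Q
  proof
    fix C assume C: "C \<in> kcliques k G"
    have P: "pc k m C G = C" by (rule pc_base[OF w C])
    have cC: "card C = k" using C unfolding kcliques_def by auto
    have fC: "finite C" using cC k by (auto intro: card_ge_0_finite)
    have "{Q \<in> kcliques k G. Q \<subseteq> C} = {C}"
    proof (rule set_eqI, rule iffI)
      fix Q assume "Q \<in> {Q \<in> kcliques k G. Q \<subseteq> C}"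
      then have "Q \<subseteq> C" "card Q = card C" using cC unfolding kcliques_def by auto
      then show "Q \<in> {C}" using card_subset_eq[OF fC] by auto
    qed (use C in auto)
    then have "cnt k m C G = 1" unfolding cnt_def P by simp
    then show "1 \<le> cnt k m C G \<and> k * card (pc k m C G) + 1 = cnt k m C G + k * k"
      using P cC by simp
  qed
next
  case (Suc d)
  from Suc.prems obtain G0 D where G0: "G0 \<in> set_pmf (ktree_process k (m + d))"
    and D: "D \<in> set_pmf (pmf_of_set (kcliques k G0))" and G: "G = add_vertex G0 D" by auto
  have w: "wf k (m + d) G0" using supp_wf[OF k G0] .
  have "finite (kcliques k G0)" "kcliques k G0 \<noteq> {}"
    using w finite_kcliques unfolding wf_def by auto
  then have D': "D \<in> kcliques k G0" using D by simp
  have I: "INV k m G0" using Suc.IH G0 by blast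
  show ?case unfolding INV_def G Q0_add[OF w le_add1]
  proof
    fix C assume C: "C \<in> Q0 k m G0"
    note sf = step_facts[OF w le_add1 D' k C]
    show "1 \<le> cnt k m C (add_vertex G0 D) \<and>
          k * card (pc k m C (add_vertex G0 D)) + 1 = cnt k m C (add_vertex G0 D) + k * k"
      using I C sf unfolding INV_def by (auto simp: card_insert_if)
  qed
qed




definition uu :: "nat \<Rightarrow> nat \<Rightarrow> nat set \<Rightarrow> graph \<Rightarrow> real" where
  "uu k m C G = real (cnt k m C G) / real k"
definition Fps :: "nat \<Rightarrow> nat \<Rightarrow> (real \<Rightarrow> real) \<Rightarrow> graph \<Rightarrow> real" where
  "Fps k m \<psi> G = (\<Sum>C\<in>Q0 k m G. \<psi> (uu k m C G))"

lemma uu_ge: "k \<ge> 1 \<Longrightarrow> INV k m G \<Longrightarrow> C \<in> Q0 k m G \<Longrightarrow> uu k m C G \<ge> 1 / real k"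
  unfolding INV_def uu_def by (auto simp: divide_right_mono)

lemma F_step:
  assumes k: "k \<ge> 1" and G: "G \<in> set_pmf (ktree_process k (m + d))"
    and rec: "\<And>u. u \<ge> 1 / real k \<Longrightarrow> u * \<psi> (u + 1) = (u + a) * \<psi> u"
  shows "(\<Sum>D\<in>kcliques k G. Fps k m \<psi> (add_vertex G D)) / real (card (kcliques k G))
         = (1 + real k * a / (1 + real k * real (m + d))) * Fps k m \<psi> G"
proof -
  let ?t = "m + d"
  let ?S = "kcliques k G"
  have w: "wf k ?t G" using supp_wf[OF k G] .
  have I: "INV k m G" using supp_INV[OF k G] .
  have fS: "finite ?S" using w finite_kcliques unfolding wf_def by auto
  have cS: "card ?S = 1 + k * ?t" using w unfolding wf_def by simp
  have kpos: "real k > 0" using k by simp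
  have inner: "(\<Sum>D\<in>?S. \<psi> (uu k m C (add_vertex G D))) = (real (card ?S) + real k * a) * \<psi> (uu k m C G)"
    if C: "C \<in> Q0 k m G" for C
  proof -
    let ?P = "pc k m C G"
    let ?u = "uu k m C G"
    have u_eq: "uu k m C (add_vertex G D) = (if D \<subseteq> ?P then ?u + 1 else ?u)" if "D \<in> ?S" for D
      using step_facts(2)[OF w le_add1 that k C] kpos unfolding uu_def by (auto simp: field_simps)
    have "(\<Sum>D\<in>?S. \<psi> (uu k m C (add_vertex G D))) = (\<Sum>D\<in>?S. if D \<subseteq> ?P then \<psi> (?u + 1) else \<psi> ?u)"
      by (rule sum.cong) (simp_all add: u_eq)
    also have "\<dots> = real (card {D \<in> ?S. D \<subseteq> ?P}) * \<psi> (?u + 1) + real (card {D \<in> ?S. \<not> D \<subseteq> ?P}) * \<psi> ?u"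
      by (simp add: sum.If_cases fS Int_def)
    also have "card {D \<in> ?S. D \<subseteq> ?P} = cnt k m C G" unfolding cnt_def ..
    also have "real (card {D \<in> ?S. \<not> D \<subseteq> ?P}) = real (card ?S) - real (cnt k m C G)"
    proof -
      have "card ?S = card {D \<in> ?S. D \<subseteq> ?P} + card {D \<in> ?S. \<not> D \<subseteq> ?P}"
        using fS by (subst card_Un_disjoint[symmetric]) (auto intro: arg_cong[where f = card])
      then show ?thesis unfolding cnt_def by simp
    qed
    also have "real (cnt k m C G) = real k * ?u" unfolding uu_def using kpos by simp
    also have "real k * ?u * \<psi> (?u + 1) = real k * ((?u + a) * \<psi> ?u)"
      using rec[OF uu_ge[OF k I C]] by simp
    finally show ?thesis by (simp add: algebra_simps)
  qed
  have "(\<Sum>D\<in>?S. Fps k m \<psi> (add_vertex G D)) = (\<Sum>D\<in>?S. \<Sum>C\<in>Q0 k m G. \<psi> (uu k m C (add_vertex G D)))"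
    unfolding Fps_def using Q0_add[OF w le_add1] by simp
  also have "\<dots> = (\<Sum>C\<in>Q0 k m G. \<Sum>D\<in>?S. \<psi> (uu k m C (add_vertex G D)))" by (rule sum.swap)
  also have "\<dots> = (\<Sum>C\<in>Q0 k m G. (real (card ?S) + real k * a) * \<psi> (uu k m C G))"
    by (rule sum.cong) (simp_all add: inner)
  also have "\<dots> = (real (card ?S) + real k * a) * Fps k m \<psi> G"
    unfolding Fps_def by (simp add: sum_distrib_left)
  finally have "(\<Sum>D\<in>?S. Fps k m \<psi> (add_vertex G D)) = (real (card ?S) + real k * a) * Fps k m \<psi> G" .
  moreover have "real (card ?S) = 1 + real k * real ?t" using cS by simp
  moreover have "1 + real k * real ?t > 0" by (simp add: add_pos_nonneg)
  ultimately show ?thesis by (simp add: field_simps)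
qed

lemma E_formula:
  assumes k: "k \<ge> 1"
    and rec: "\<And>u. u \<ge> 1 / real k \<Longrightarrow> u * \<psi> (u + 1) = (u + a) * \<psi> u"
    and nn: "\<And>u. u \<ge> 1 / real k \<Longrightarrow> \<psi> u \<ge> 0"
  shows "measure_pmf.expectation (ktree_process k (m + d)) (Fps k m \<psi>) =
         (1 + real k * real m) * \<psi> (1 / real k) *
         (\<Prod>j<d. 1 + real k * a / (1 + real k * real (m + j)))"
proof (induction d)
  case 0
  have "measure_pmf.expectation (ktree_process k m) (Fps k m \<psi>) =
        measure_pmf.expectation (ktree_process k m) (\<lambda>_. (1 + real k * real m) * \<psi> (1 / real k))"
  proof (rule integral_cong_AE)
    show "AE G in measure_pmf (ktree_process k m). Fps k m \<psi> G = (1 + real k * real m) * \<psi> (1 / real k)"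
      unfolding AE_measure_pmf_iff
    proof
      fix G assume G: "G \<in> set_pmf (ktree_process k m)"
      have w: "wf k m G" using supp_wf[OF k G] .
      have I: "INV k m G" using supp_INV[OF k, of G m 0] G by simp
      have Q: "Q0 k m G = kcliques k G" unfolding Q0_def initial_self[OF w] ..
      have "uu k m C G = 1 / real k" if C: "C \<in> kcliques k G" for C
      proof -
        have P: "pc k m C G = C" by (rule pc_base[OF w C])
        have "card C = k" using C unfolding kcliques_def by auto
        then have "cnt k m C G = 1" using I C Q P unfolding INV_def by auto
        then show ?thesis unfolding uu_def by simp
      qed
      then have "Fps k m \<psi> G = (\<Sum>C\<in>kcliques k G. \<psi> (1 / real k))" unfolding Fps_def Q by simp
      also have "\<dots> = (1 + real k * real m) * \<psi> (1 / real k)" using w unfolding wf_def by simp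
      finally show "Fps k m \<psi> G = (1 + real k * real m) * \<psi> (1 / real k)" .
    qed
  qed simp_all
  then show ?case by simp
next
  case (Suc d)
  have "measure_pmf.expectation (ktree_process k (Suc (m + d))) (Fps k m \<psi>) =
        (1 + real k * a / (1 + real k * real (m + d))) * measure_pmf.expectation (ktree_process k (m + d)) (Fps k m \<psi>)"
  proof (rule exp_step[OF k])
    fix G assume G: "G \<in> set_pmf (ktree_process k (Suc (m + d)))"
    have I: "INV k m G" using supp_INV[OF k, of G m "Suc d"] G by simp
    show "Fps k m \<psi> G \<ge> 0" unfolding Fps_def using nn uu_ge[OF k I] by (auto intro: sum_nonneg)
  next
    fix G assume G: "G \<in> set_pmf (ktree_process k (m + d))"
    show "(\<Sum>D\<in>kcliques k G. Fps k m \<psi> (add_vertex G D)) / real (card (kcliques k G)) =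
          (1 + real k * a / (1 + real k * real (m + d))) * Fps k m \<psi> G"
      by (rule F_step[OF k G rec])
  qed
  then show ?case using Suc.IH by (simp add: mult_ac)
qed




definition hh :: "real \<Rightarrow> real \<Rightarrow> real" where
  "hh s u = Gamma (u - s) / Gamma u"

lemma Gamma_pos: "x > (0::real) \<Longrightarrow> Gamma x > 0"
  by (simp add: Gamma_real_pos_exp)

lemma Gamma_plus1_pos: "x > (0::real) \<Longrightarrow> Gamma (x + 1) = x * Gamma x"
  by (rule Gamma_plus1) (auto elim!: nonpos_Ints_cases)

lemma hh_rec: assumes "u > s" "s > 0" shows "u * hh s (u + 1) = (u + - s) * hh s u"
proof -
  have "Gamma (u + 1 - s) = (u - s) * Gamma (u - s)"
    using Gamma_plus1_pos[of "u - s"] assms by (simp add: algebra_simps)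
  moreover have "Gamma (u + 1) = u * Gamma u" using Gamma_plus1_pos[of u] assms by simp
  moreover have "u > 0" using assms by simp
  ultimately show ?thesis unfolding hh_def by (simp add: field_simps)
qed

lemma hh_nn: "u > s \<Longrightarrow> s > 0 \<Longrightarrow> hh s u \<ge> 0"
  unfolding hh_def using Gamma_pos[of "u - s"] Gamma_pos[of u] by simp

lemma hh_pos: "u > s \<Longrightarrow> s > 0 \<Longrightarrow> hh s u > 0"
  unfolding hh_def using Gamma_pos[of "u - s"] Gamma_pos[of u] by simp

lemma hh_lower:
  assumes "u > s" "s > 0" "s < 1"
  shows "1 \<le> u powr s * hh s u"
proof -
  let ?x = "u - s" and ?y = "u - s + 1"
  have x: "?x > 0" using assms by simp
  have "(ln \<circ> Gamma) ((1 - s) *\<^sub>R ?x + s *\<^sub>R ?y) \<le> (1 - s) * (ln \<circ> Gamma) ?x + s * (ln \<circ> Gamma) ?y"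
    by (rule convex_onD[OF log_convex_Gamma_real]) (use assms in auto)
  moreover have "(1 - s) *\<^sub>R ?x + s *\<^sub>R ?y = u" by (simp add: algebra_simps)
  moreover have "Gamma ?y = ?x * Gamma ?x" using Gamma_plus1_pos[OF x] .
  ultimately have "ln (Gamma u) \<le> (1 - s) * ln (Gamma ?x) + s * ln (?x * Gamma ?x)" by simp
  also have "ln (?x * Gamma ?x) = ln ?x + ln (Gamma ?x)" using ln_mult_pos[OF x Gamma_pos[OF x]] .
  finally have a: "ln (Gamma u) \<le> ln (Gamma ?x) + s * ln ?x" by (simp add: algebra_simps)
  have b: "s * ln ?x \<le> s * ln u" using assms x by (intro mult_left_mono) auto
  have "ln (Gamma u) \<le> ln (Gamma ?x) + s * ln u" using a b by linarith
  then have "exp (ln (Gamma u)) \<le> exp (ln (Gamma ?x) + s * ln u)" by simp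
  then have "Gamma u \<le> Gamma ?x * u powr s"
    using Gamma_pos[OF x] Gamma_pos[of u] assms by (simp add: exp_add powr_def)
  then show ?thesis unfolding hh_def using Gamma_pos[of u] assms by (simp add: field_simps)
qed

lemma card_pc_real:
  assumes k: "k \<ge> 1" and I: "INV k m G" and C: "C \<in> Q0 k m G"
  shows "real (card (pc k m C G)) = uu k m C G - 1 / real k + real k"
proof -
  have "k * card (pc k m C G) + 1 = cnt k m C G + k * k" using I C unfolding INV_def by auto
  then have "real k * real (card (pc k m C G)) + 1 = real (cnt k m C G) + real k * real k"
    by (metis of_nat_add of_nat_mult of_nat_1)
  then show ?thesis using k unfolding uu_def by (simp add: field_simps)
qed

lemma count_bound:
  assumes k: "k \<ge> 1" and G: "G \<in> set_pmf (ktree_process k n)" and mn: "m \<le> n"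
    and L: "L > 0" and U: "U - real k > 0" and s: "0 < s" "s < 1 / real k"
  shows "real (card {C \<in> Q0 k m G. \<not> (L \<le> real (card (pc k m C G)) \<and> real (card (pc k m C G)) \<le> U)})
    \<le> L powr s * Fps k m (hh s) G + Fps k m (\<lambda>u. u) G / (U - real k)"
proof -
  have G': "G \<in> set_pmf (ktree_process k (m + (n - m)))" using G mn by simp
  have w: "wf k n G" using supp_wf[OF k G] .
  have I: "INV k m G" using supp_INV[OF k G'] .
  have fin: "finite (Q0 k m G)" using Q0_fin[OF w mn] .
  have "real k \<ge> 1" using k by simp
  then have "1 / real k \<le> 1" by simp
  then have s1: "s < 1" using s by linarith
  let ?A = "{C \<in> Q0 k m G. \<not> (L \<le> real (card (pc k m C G)) \<and> real (card (pc k m C G)) \<le> U)}"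
  let ?g = "\<lambda>C. L powr s * hh s (uu k m C G) + uu k m C G / (U - real k)"
  have ge: "uu k m C G \<ge> 1 / real k" if "C \<in> Q0 k m G" for C using uu_ge[OF k I that] .
  have ineq: "1 \<le> ?g C" if C: "C \<in> ?A" for C
  proof -
    let ?u = "uu k m C G"
    have CQ: "C \<in> Q0 k m G" using C by simp
    have u1: "?u > s" using ge[OF CQ] s by simp
    have hn: "hh s ?u \<ge> 0" using hh_nn[OF u1 s(1)] .
    have un: "?u / (U - real k) \<ge> 0" using u1 s U by simp
    have cp: "real (card (pc k m C G)) = ?u - 1 / real k + real k" using card_pc_real[OF k I CQ] .
    have rk: "real k \<ge> 1" using k by simp
    then have "1 / real k \<le> 1" by simp
    then have kk: "1 / real k \<le> real k" using rk by linarith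
    consider "real (card (pc k m C G)) < L" | "real (card (pc k m C G)) > U" using C by auto
    then show ?thesis
    proof cases
      case 1
      then have "?u < L" using cp kk by simp
      then have "?u powr s \<le> L powr s" using u1 s by (intro powr_mono2) auto
      then have "?u powr s * hh s ?u \<le> L powr s * hh s ?u" using hn by (rule mult_right_mono)
      then have "1 \<le> L powr s * hh s ?u" using hh_lower[OF u1 s(1) s1] by simp
      then show ?thesis using un by simp
    next
      case 2
      moreover have "1 / real k > 0" using k by simp
      ultimately have "?u > U - real k" using cp by linarith
      then have "1 \<le> ?u / (U - real k)" using U by simp
      moreover have "0 \<le> L powr s * hh s ?u" using hn L by simp
      ultimately show ?thesis by simp
    qed
  qed
  have "real (card ?A) = (\<Sum>C\<in>?A. 1)" by simp
  also have "\<dots> \<le> (\<Sum>C\<in>?A. ?g C)" by (rule sum_mono) (use ineq in auto)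
  also have "\<dots> \<le> (\<Sum>C\<in>Q0 k m G. ?g C)"
  proof (rule sum_mono2[OF fin])
    show "?A \<subseteq> Q0 k m G" by auto
    fix C assume "C \<in> Q0 k m G - ?A"
    then have CQ: "C \<in> Q0 k m G" by simp
    have u1: "uu k m C G > s" using ge[OF CQ] s by simp
    show "0 \<le> ?g C" using hh_nn[OF u1 s(1)] u1 s L U by simp
  qed
  also have "\<dots> = L powr s * Fps k m (hh s) G + Fps k m (\<lambda>u. u) G / (U - real k)"
    unfolding Fps_def by (simp add: sum.distrib sum_distrib_left sum_divide_distrib)
  finally show ?thesis .
qed




lemma one_minus_le_powr:
  fixes b s :: real
  assumes b: "b > 0" and s: "s \<ge> 0"
  shows "1 - s / b \<le> (b / (b + 1)) powr s"
proof -
  have l: "ln (1 + 1 / b) \<le> 1 / b" using ln_add_one_self_le_self[of "1/b"] b by simp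
  have "ln (b / (b + 1)) = - ln (1 + 1 / b)"
    using b by (simp add: ln_div field_simps)
  then have "s * ln (b / (b + 1)) \<ge> - s / b" using l s
    by (simp add: mult_left_mono) (metis mult_left_mono mult.right_neutral times_divide_eq_right)
  then have "1 - s / b \<le> 1 + s * ln (b / (b + 1))" by simp
  also have "\<dots> \<le> exp (s * ln (b / (b + 1)))" by (rule exp_ge_add_one_self)
  also have "\<dots> = (b / (b + 1)) powr s" using b by (simp add: powr_def)
  finally show ?thesis .
qed

lemma prod_s:
  fixes a s :: real
  assumes a: "a > 0" and s: "0 < s" "s \<le> a"
  shows "(\<Prod>j<d. 1 - s / (a + real j)) \<le> (a / (a + real d)) powr s"
proof (induction d)
  case 0 then show ?case using a by simp
next
  case (Suc d)
  let ?b = "a + real d"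
  have b: "?b > 0" using a by simp
  have f0: "0 \<le> 1 - s / ?b" using s a by (simp add: field_simps)
  have "(\<Prod>j<Suc d. 1 - s / (a + real j)) = (\<Prod>j<d. 1 - s / (a + real j)) * (1 - s / ?b)" by simp
  also have "\<dots> \<le> (a / ?b) powr s * (1 - s / ?b)" using Suc.IH f0 by (rule mult_right_mono)
  also have "\<dots> \<le> (a / ?b) powr s * (?b / (?b + 1)) powr s"
    using one_minus_le_powr[OF b, of s] s by (intro mult_left_mono) auto
  also have "\<dots> = (a / ?b * (?b / (?b + 1))) powr s"
    using powr_mult[of "a/?b" "?b/(?b+1)" s] a b by simp
  also have "a / ?b * (?b / (?b + 1)) = a / (a + real (Suc d))"
  proof -
    have "a / ?b * (?b / (?b + 1)) = (a * ?b) / ((?b + 1) * ?b)" by (simp add: mult.commute)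
    also have "\<dots> = a / (?b + 1)" using b by (intro nonzero_mult_divide_mult_cancel_right) simp
    finally show ?thesis using b by simp
  qed
  finally show ?case .
qed

lemma prod_id:
  assumes k: "k \<ge> 1"
  shows "(\<Prod>j<d. 1 + real k * 1 / (1 + real k * real (m + j))) = (1 + real k * real (m + d)) / (1 + real k * real m)"
proof (induction d)
  case 0
  have "0 \<le> real k * real m" by simp
  then have "1 + real k * real m \<noteq> 0" by linarith
  then show ?case by simp
next
  case (Suc d)
  have p1: "1 + real k * real (m + d) > 0" "1 + real k * real m > 0" by (simp_all add: add_pos_nonneg)
  have "(\<Prod>j<Suc d. 1 + real k * 1 / (1 + real k * real (m + j))) =
        (1 + real k * real (m + d)) / (1 + real k * real m) * (1 + real k * 1 / (1 + real k * real (m + d)))"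
    using Suc by simp
  also have "\<dots> = (1 + real k * real (m + Suc d)) / (1 + real k * real m)"
  proof -
    define A where "A = 1 + real k * real (m + d)"
    define B where "B = 1 + real k * real m"
    have A: "A > 0" "B > 0" using p1 unfolding A_def B_def by auto
    have "A / B * (1 + real k * 1 / A) = (A + real k) / B" using A by (simp add: field_simps)
    moreover have "A + real k = 1 + real k * real (m + Suc d)" unfolding A_def by (simp add: algebra_simps)
    ultimately have e: "A / B * (1 + real k * 1 / A) = (1 + real k * real (m + Suc d)) / B" by simp
    show ?thesis using e unfolding A_def B_def .
  qed
  finally show ?case .
qed

lemma E_count_bound:
  assumes k: "k \<ge> 2" and mn: "m \<le> n" and L: "L > 0" and U: "U - real k > 0"
  defines "s \<equiv> 1 / (2 * real k)"
  shows "measure_pmf.expectation (ktree_process k n)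
           (\<lambda>G. real (card {C \<in> Q0 k m G. \<not> (L \<le> real (card (pc k m C G)) \<and> real (card (pc k m C G)) \<le> U)}))
   \<le> L powr s * ((1 + real k * real m) * hh s (1 / real k) * ((real m + 1 / real k) / (real n + 1 / real k)) powr s)
     + (1 + real k * real n) / real k / (U - real k)"
proof -
  have k1: "k \<ge> 1" using k by simp
  have kpos: "real k > 0" using k by simp
  have s0: "0 < s" "s < 1 / real k" using kpos unfolding s_def by (simp_all add: field_simps)
  define d where "d = n - m"
  have nd: "n = m + d" using mn d_def by simp
  let ?p = "ktree_process k n"
  have fin: "finite (set_pmf ?p)" using supp_fin[OF k1] .
  let ?cnt = "\<lambda>G. real (card {C \<in> Q0 k m G. \<not> (L \<le> real (card (pc k m C G)) \<and> real (card (pc k m C G)) \<le> U)})"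
  have e1: "measure_pmf.expectation ?p ?cnt \<le>
        measure_pmf.expectation ?p (\<lambda>G. L powr s * Fps k m (hh s) G + Fps k m (\<lambda>u. u) G / (U - real k))"
    by (rule integral_mono_AE)
       (use fin count_bound[OF k1 _ mn L U s0] in \<open>auto simp: integrable_measure_pmf_finite AE_measure_pmf_iff\<close>)
  have e1': "measure_pmf.expectation ?p (\<lambda>G. L powr s * Fps k m (hh s) G + Fps k m (\<lambda>u. u) G / (U - real k))
     = L powr s * measure_pmf.expectation ?p (Fps k m (hh s))
                 + measure_pmf.expectation ?p (Fps k m (\<lambda>u. u)) / (U - real k)"
    using fin by (simp add: integrable_measure_pmf_finite)
  have e2: "measure_pmf.expectation ?p (Fps k m (hh s)) =
      (1 + real k * real m) * hh s (1 / real k) * (\<Prod>j<d. 1 + real k * - s / (1 + real k * real (m + j)))"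
    unfolding nd
  proof (rule E_formula[OF k1])
    fix u assume "u \<ge> 1 / real k"
    then have "u > s" using s0 by simp
    then show "u * hh s (u + 1) = (u + - s) * hh s u" using hh_rec s0 by blast
    show "hh s u \<ge> 0" using hh_nn \<open>u > s\<close> s0 by blast
  qed
  have e3: "(\<Prod>j<d. 1 + real k * - s / (1 + real k * real (m + j))) =
             (\<Prod>j<d. 1 - s / ((real m + 1 / real k) + real j))"
    by (rule prod.cong) (use kpos in \<open>simp_all add: field_simps\<close>)
  have e4: "(\<Prod>j<d. 1 - s / (real m + 1 / real k + real j)) \<le> ((real m + 1 / real k) / (real n + 1 / real k)) powr s"
  proof -
    have eq: "real m + 1 / real k + real d = real n + 1 / real k" using nd by simp
    show ?thesis using prod_s[of "real m + 1 / real k" s d] s0 kpos unfolding eq by (simp add: add_pos_nonneg)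
  qed
  have e5: "measure_pmf.expectation ?p (Fps k m (\<lambda>u. u)) =
      (1 + real k * real m) * (1 / real k) * (\<Prod>j<d. 1 + real k * 1 / (1 + real k * real (m + j)))"
    unfolding nd
  proof (rule E_formula[OF k1])
    fix u assume u: "u \<ge> 1 / real k"
    have "1 / real k > 0" using kpos by simp
    then show "u \<ge> 0" using u by linarith
  qed simp
  have e6: "(\<Prod>j<d. 1 + real k * 1 / (1 + real k * real (m + j))) = (1 + real k * real n) / (1 + real k * real m)"
    using prod_id[OF k1] nd by simp
  have e7: "(1 + real k * real m) * (1 / real k) * ((1 + real k * real n) / (1 + real k * real m))
       = (1 + real k * real n) / real k"
  proof -
    have "0 \<le> real k * real m" by simp
    then have B: "1 + real k * real m \<noteq> 0" by linarith
    then show ?thesis by simp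
  qed
  have hp: "hh s (1 / real k) \<ge> 0" using hh_nn s0 by simp
  have "measure_pmf.expectation ?p (Fps k m (hh s)) \<le>
        (1 + real k * real m) * hh s (1 / real k) * ((real m + 1 / real k) / (real n + 1 / real k)) powr s"
    unfolding e2 e3 using e4 hp by (intro mult_left_mono) (auto simp: add_pos_nonneg)
  then have "L powr s * measure_pmf.expectation ?p (Fps k m (hh s)) \<le>
        L powr s * ((1 + real k * real m) * hh s (1 / real k) * ((real m + 1 / real k) / (real n + 1 / real k)) powr s)"
    by (intro mult_left_mono) auto
  moreover have "measure_pmf.expectation ?p (Fps k m (\<lambda>u. u)) / (U - real k) =
      (1 + real k * real n) / real k / (U - real k)"
    unfolding e5 e6 e7 ..
  ultimately show ?thesis using e1 e1' by linarith
qed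




lemma nmc_eq:
  assumes k: "k \<ge> 1" and G: "G \<in> set_pmf (ktree_process k n)" and mn: "m \<le> n"
  shows "non_moderate_count k f n m G =
    card {C \<in> Q0 k m G. \<not> (real n / (real m * f n) \<le> real (card (pc k m C G)) \<and>
                            real (card (pc k m C G)) \<le> real n * f n / real m)}"
proof -
  have w: "wf k n G" using supp_wf[OF k G] .
  show ?thesis unfolding non_moderate_count_def Q0_def pc_def verts_initial[OF w mn] ..
qed

lemma per_n:
  fixes f :: "nat \<Rightarrow> real"
  assumes k: "k \<ge> 2" and mn: "m \<le> n" and m1: "m \<ge> 1" and f1: "f n \<ge> 1"
    and h: "2 * real k * real m \<le> real n * f n"
  defines "s \<equiv> 1 / (2 * real k)"
  shows "measure_pmf.expectation (ktree_process k n) (\<lambda>G. real (non_moderate_count k f n m G))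
     \<le> real m * ((real k + 1) * hh s (1 / real k) * (2 / f n) powr s + 4 / f n)"
proof -
  have k1: "k \<ge> 1" using k by simp
  have kpos: "real k > 0" using k by simp
  have rk: "real k \<ge> 1" using k by simp
  have rm: "real m \<ge> 1" using m1 by simp
  have rn: "real n \<ge> 1" using mn m1 by simp
  have s0: "0 < s" "s < 1 / real k" using kpos unfolding s_def by (simp_all add: field_simps)
  define L where "L = real n / (real m * f n)"
  define U where "U = real n * f n / real m"
  have L: "L > 0" unfolding L_def using rn rm f1 by simp
  have Uk: "U - real k \<ge> real n * f n / (2 * real m)"
  proof -
    have "real k * real m \<le> real n * f n / 2" using h by simp
    then have "real k \<le> real n * f n / (2 * real m)" using rm by (simp add: field_simps)
    then show ?thesis unfolding U_def using rm by (simp add: field_simps)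
  qed
  have Upos: "real n * f n / (2 * real m) > 0" using rn rm f1 by simp
  have U: "U - real k > 0" using Uk Upos by linarith
  let ?p = "ktree_process k n"
  have "measure_pmf.expectation ?p (\<lambda>G. real (non_moderate_count k f n m G)) =
        measure_pmf.expectation ?p (\<lambda>G. real (card {C \<in> Q0 k m G. \<not> (L \<le> real (card (pc k m C G)) \<and> real (card (pc k m C G)) \<le> U)}))"
    by (rule integral_cong_AE) (use nmc_eq[OF k1 _ mn] in \<open>auto simp: AE_measure_pmf_iff L_def U_def\<close>)
  also have "\<dots> \<le> L powr s * ((1 + real k * real m) * hh s (1 / real k) * ((real m + 1 / real k) / (real n + 1 / real k)) powr s)
     + (1 + real k * real n) / real k / (U - real k)"
    using E_count_bound[OF k mn L U] unfolding s_def .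
  also have "\<dots> \<le> real m * ((real k + 1) * hh s (1 / real k) * (2 / f n) powr s) + real m * (4 / f n)"
  proof (rule add_mono)
    have hp: "hh s (1 / real k) \<ge> 0" using hh_nn s0 by simp
    have c1: "1 / real k \<le> 1" using rk by simp
    have c0: "1 / real k > 0" using kpos by simp
    have npos: "real n + 1 / real k > 0" "real m + 1 / real k \<ge> 0" using c0 rn rm by linarith+
    have "L * ((real m + 1 / real k) / (real n + 1 / real k)) \<le> 2 / f n"
    proof -
      have "L * ((real m + 1 / real k) / (real n + 1 / real k)) = (real n / (real n + 1 / real k)) * ((real m + 1 / real k) / real m) / f n"
        unfolding L_def using rm rn f1 c0 by (simp add: field_simps)
      also have "\<dots> \<le> 1 * 2 / f n"
      proof -
        have a: "real n / (real n + 1 / real k) \<le> 1"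
        proof -
          have pos: "real n + 1 / real k > 0" using c0 rn by linarith
          have "real n \<le> real n + 1 / real k" using c0 by linarith
          then show ?thesis using pos by simp
        qed
        have b: "(real m + 1 / real k) / real m \<le> 2" using c1 rm by (simp add: field_simps)
        have "(real n / (real n + 1 / real k)) * ((real m + 1 / real k) / real m) \<le> 1 * 2"
        proof (rule mult_mono[OF a b])
          show "0 \<le> (real m + 1 / real k) / real m" using c0 rm by (intro divide_nonneg_pos) auto
        qed simp
        then show ?thesis using f1 by (intro divide_right_mono) auto
      qed
      finally show ?thesis by simp
    qed
    then have "(L * ((real m + 1 / real k) / (real n + 1 / real k))) powr s \<le> (2 / f n) powr s"
      using L c0 rm rn s0 by (intro powr_mono2) auto
    moreover have X0: "(real m + 1 / real k) / (real n + 1 / real k) \<ge> 0"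
      using npos by (intro divide_nonneg_pos)
    moreover have "(L * ((real m + 1 / real k) / (real n + 1 / real k))) powr s =
        L powr s * ((real m + 1 / real k) / (real n + 1 / real k)) powr s"
      by (rule powr_mult)
    ultimately have pw: "L powr s * ((real m + 1 / real k) / (real n + 1 / real k)) powr s \<le> (2 / f n) powr s"
      by simp
    have km: "1 + real k * real m \<le> (real k + 1) * real m" using rm by (simp add: algebra_simps)
    have "L powr s * ((1 + real k * real m) * hh s (1 / real k) * ((real m + 1 / real k) / (real n + 1 / real k)) powr s)
       = (1 + real k * real m) * hh s (1 / real k) * (L powr s * ((real m + 1 / real k) / (real n + 1 / real k)) powr s)"
      by (simp add: mult_ac)
    also have "\<dots> \<le> (1 + real k * real m) * hh s (1 / real k) * (2 / f n) powr s"
      using pw hp by (intro mult_left_mono) (auto simp: add_pos_nonneg)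
    also have "\<dots> \<le> (real k + 1) * real m * hh s (1 / real k) * (2 / f n) powr s"
      using km hp by (intro mult_right_mono) auto
    finally show "L powr s * ((1 + real k * real m) * hh s (1 / real k) * ((real m + 1 / real k) / (real n + 1 / real k)) powr s)
       \<le> real m * ((real k + 1) * hh s (1 / real k) * (2 / f n) powr s)" by (simp add: mult_ac)
  next
    have kn: "1 * 1 \<le> real k * real n" by (rule mult_mono) (use rk rn in auto)
    have "1 + real k * real n \<le> 2 * real n * real k" using kn by (simp add: algebra_simps)
    then have a: "(1 + real k * real n) / real k \<le> 2 * real n"
      using kpos by (simp add: pos_divide_le_eq)
    have "(1 + real k * real n) / real k / (U - real k) \<le> (2 * real n) / (real n * f n / (2 * real m))"
      using a Uk Upos U by (intro frac_le) (auto simp: add_pos_nonneg)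
    also have "\<dots> = real m * (4 / f n)" using rn rm f1 by (simp add: field_simps)
    finally show "(1 + real k * real n) / real k / (U - real k) \<le> real m * (4 / f n)" .
  qed
  also have "\<dots> = real m * ((real k + 1) * hh s (1 / real k) * (2 / f n) powr s + 4 / f n)"
    by (simp add: algebra_simps)
  finally show ?thesis .
qed




lemma ev_powr:
  assumes p: "p > 0"
  shows "eventually (\<lambda>n::nat. real n powr p \<ge> C) sequentially"
proof -
  define C' where "C' = max C 1"
  have C': "C' > 0" "C \<le> C'" unfolding C'_def by auto
  obtain N :: nat where N: "C' powr (1 / p) \<le> real N" using real_arch_simple by blast
  show ?thesis
  proof (rule eventually_sequentiallyI[of N])
    fix n assume "N \<le> n"
    then have "C' powr (1 / p) \<le> real n" using N by linarith
    then have "(C' powr (1 / p)) powr p \<le> real n powr p" using p by (intro powr_mono2) auto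
    also have "(C' powr (1 / p)) powr p = C'" using C' p by (simp add: powr_powr)
    finally show "C \<le> real n powr p" using C' by linarith
  qed
qed

theorem lemma9:
  fixes k :: nat and f :: "nat \<Rightarrow> real" and m :: "nat \<Rightarrow> nat"
  assumes "k \<ge> 2"
    and "f \<in> o(\<lambda>n. ln (ln (real n)))"
    and "filterlim f at_top sequentially"
    and "\<And>n. m n = nat \<lceil>f n * real n powr (1 - real k / real (k^2 + k - 1))\<rceil>"
  shows "\<exists>g :: nat \<Rightarrow> real. (\<lambda>n. g n / real (m n)) \<longlonglongrightarrow> 0 \<and>
           (\<lambda>n. measure_pmf.prob (ktree_process k n)
                  {G. real (non_moderate_count k f n (m n) G) \<le> g n}) \<longlonglongrightarrow> 1"
proof -
  note k = assms(1)
  have k1: "k \<ge> 1" using k by simp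
  have kpos: "real k > 0" using k by simp
  have rk: "real k \<ge> 2" using k by simp
  define q where "q = real k / real (k^2 + k - 1)"
  define e where "e = 1 - real k / real (k^2 + k - 1)"
  have kk: "k^2 + k - 1 \<ge> 1" using k by (simp add: power2_eq_square)
  have d: "real (k^2 + k - 1) > 0" using kk by (simp only: of_nat_0_less_iff)
  have q: "q > 0" unfolding q_def by (rule divide_pos_pos[OF kpos d])
  have eq: "e + q = 1" unfolding e_def q_def by simp
  define s where "s = 1 / (2 * real k)"
  have s: "s > 0" unfolding s_def using kpos by simp
  define H0 where "H0 = hh s (1 / real k)"
  have H0: "H0 \<ge> 0" unfolding H0_def by (rule hh_nn) (use kpos in \<open>auto simp: s_def field_simps\<close>)
  define r where "r n = (real k + 1) * H0 * (2 / f n) powr s + 4 / f n" for n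
  define g where "g n = real (m n) * sqrt (r n)" for n
  have fat: "filterlim f at_infinity sequentially" using assms(3) by (rule filterlim_at_top_imp_at_infinity)
  have f0: "(\<lambda>n. 2 / f n) \<longlonglongrightarrow> 0" by (rule tendsto_divide_0[OF tendsto_const fat])
  have f0': "(\<lambda>n. 4 / f n) \<longlonglongrightarrow> 0" by (rule tendsto_divide_0[OF tendsto_const fat])
  have evf: "eventually (\<lambda>n. f n \<ge> 1) sequentially" using assms(3) by (simp add: filterlim_at_top)
  have "(\<lambda>n. (2 / f n) powr s) \<longlonglongrightarrow> 0"
    by (rule tendsto_zero_powrI[OF f0 tendsto_const _ s]) (use evf in \<open>auto elim: eventually_mono\<close>)
  then have "(\<lambda>n. (real k + 1) * H0 * (2 / f n) powr s) \<longlonglongrightarrow> (real k + 1) * H0 * 0"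
    by (intro tendsto_mult tendsto_const)
  then have r0: "r \<longlonglongrightarrow> 0" unfolding r_def using tendsto_add[OF _ f0'] by fastforce
  have sr0: "(\<lambda>n. sqrt (r n)) \<longlonglongrightarrow> 0" using tendsto_real_sqrt[OF r0] by simp
  have evo: "eventually (\<lambda>n. norm (f n) \<le> 1 * norm (ln (ln (real n)))) sequentially"
    using landau_o.smallD[OF assms(2), of 1] by simp
  have ev1: "eventually (\<lambda>n. real n powr (q / 2) \<ge> 16 * real k / q) sequentially"
    using ev_powr q by simp
  have ev2: "eventually (\<lambda>n. real n powr q \<ge> 4 * real k) sequentially"
    using ev_powr q by simp
  have ev3: "eventually (\<lambda>n. n \<ge> 4 * k + 3) sequentially" by (rule eventually_ge_at_top)
  have good: "eventually (\<lambda>n. f n \<ge> 1 \<and> m n \<ge> 1 \<and> m n \<le> n \<and> 2 * real k * real (m n) \<le> real n * f n) sequentially"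
    using evo ev1 ev2 ev3 evf
  proof eventually_elim
    case (elim n)
    have rn: "real n \<ge> 4 * real k + 3" using elim(4) by (metis of_nat_add of_nat_mono of_nat_mult of_nat_numeral)
    have n0: "real n > 1" using rn kpos by linarith
    have ln1: "ln (real n) > 0" using n0 by simp
    have lnln: "ln (ln (real n)) \<le> ln (real n)" using ln1 ln_le_minus_one[OF ln1] by linarith
    have "(q / 2) * ln (real n) = ln (real n powr (q / 2))" using n0 by (simp add: ln_powr)
    also have "\<dots> \<le> real n powr (q / 2) - 1" using n0 by (intro ln_le_minus_one) simp
    finally have "ln (real n) \<le> (2 / q) * real n powr (q / 2)" using q by (simp add: field_simps)
    also have "(2 / q) * real n powr (q / 2) \<le> real n powr q / (8 * real k)"
    proof -
      have "real n powr q = real n powr (q / 2) * real n powr (q / 2)"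
        by (simp add: powr_add[symmetric])
      moreover have "16 * real k / q * real n powr (q / 2) \<le> real n powr (q / 2) * real n powr (q / 2)"
        using elim(2) by (intro mult_right_mono) auto
      ultimately show ?thesis using q kpos by (simp add: field_simps)
    qed
    finally have lnb: "ln (real n) \<le> real n powr q / (8 * real k)" .
    have "exp 1 \<le> real n" using exp_le rn kpos by linarith
    then have "ln (exp 1) \<le> ln (real n)" using n0 by (subst ln_le_cancel_iff) auto
    then have "ln (real n) \<ge> 1" by simp
    then have lnln0: "ln (ln (real n)) \<ge> 0" by simp
    have "f n \<le> \<bar>ln (ln (real n))\<bar>" using elim(1) by simp
    then have fn: "f n \<le> real n powr q / (8 * real k)" using lnln lnb lnln0 by simp
    have f1: "f n \<ge> 1" using elim(5) .
    have pq: "real n powr e * real n powr q = real n" using n0 eq by (simp add: powr_add[symmetric])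
    have pe: "real n powr e > 0" using n0 by simp
    define x where "x = f n * real n powr e"
    have x0: "x > 0" unfolding x_def using f1 pe by simp
    have xb: "x \<le> real n / (8 * real k)"
    proof -
      have "x \<le> real n powr q / (8 * real k) * real n powr e" unfolding x_def using fn pe by (intro mult_right_mono) auto
      also have "\<dots> = real n / (8 * real k)" using pq by (simp add: mult_ac)
      finally show ?thesis .
    qed
    have xe: "real n powr e \<le> real n / (4 * real k)"
    proof -
      have "real n powr e * (4 * real k) \<le> real n powr e * real n powr q" using elim(3) pe by (intro mult_left_mono) auto
      then show ?thesis using pq kpos by (simp add: field_simps)
    qed
    have mx: "m n = nat \<lceil>x\<rceil>" unfolding x_def e_def by (rule assms(4))
    have mle: "real (m n) \<le> x + 1" unfolding mx using x0 by (simp add: of_nat_nat)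
    have "0 < \<lceil>x\<rceil>" using x0 by simp
    then have mge: "m n \<ge> 1" unfolding mx by linarith
    have "real n / (8 * real k) \<le> real n / 2" using kpos rn rk by (intro divide_left_mono) auto
    then have "real (m n) \<le> real n" using mle xb rn kpos by linarith
    then have mn: "m n \<le> n" by simp
    have "2 * real k * real (m n) \<le> 2 * real k * (x + 1)" using mle kpos by simp
    also have "\<dots> = 2 * real k * f n * real n powr e + 2 * real k" unfolding x_def by (simp add: algebra_simps)
    also have "\<dots> \<le> 2 * real k * f n * (real n / (4 * real k)) + 2 * real k"
      using xe f1 kpos by (intro add_right_mono mult_left_mono) auto
    also have "\<dots> = real n * f n / 2 + 2 * real k" using kpos by (simp add: field_simps)
    also have "\<dots> \<le> real n * f n"
    proof -
      have "real n * 1 \<le> real n * f n" using f1 rn by (intro mult_left_mono) auto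
      then show ?thesis using rn kpos by linarith
    qed
    finally show ?case using f1 mge mn by simp
  qed
  show ?thesis
  proof (intro exI conjI)
    show "(\<lambda>n. g n / real (m n)) \<longlonglongrightarrow> 0"
    proof (subst tendsto_cong)
      show "eventually (\<lambda>n. g n / real (m n) = sqrt (r n)) sequentially"
        using good by eventually_elim (simp add: g_def)
    qed (rule sr0)
    have lower: "eventually (\<lambda>n. 1 - sqrt (r n) \<le> measure_pmf.prob (ktree_process k n)
                  {G. real (non_moderate_count k f n (m n) G) \<le> g n}) sequentially"
      using good
    proof eventually_elim
      case (elim n)
      let ?p = "ktree_process k n"
      let ?c = "\<lambda>G. real (non_moderate_count k f n (m n) G)"
      have f1: "f n \<ge> 1" and m1: "m n \<ge> 1" and mn: "m n \<le> n" and h: "2 * real k * real (m n) \<le> real n * f n"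
        using elim by auto
      have E: "measure_pmf.expectation ?p ?c \<le> real (m n) * r n"
        using per_n[of k "m n" n f, OF k mn m1 f1 h] unfolding r_def H0_def s_def .
      have rpos: "r n > 0" unfolding r_def using f1 H0 by (intro add_nonneg_pos) auto
      have srpos: "sqrt (r n) > 0" using rpos by simp
      have gpos: "g n > 0" unfolding g_def using m1 srpos by simp
      have "measure_pmf.prob ?p {G \<in> space (measure_pmf ?p). ?c G \<ge> g n} \<le> measure_pmf.expectation ?p ?c / g n"
        by (rule integral_Markov_inequality_measure)
           (use supp_fin[OF k1] gpos in \<open>auto simp: integrable_measure_pmf_finite\<close>)
      also have "\<dots> \<le> real (m n) * r n / g n" using E gpos by (simp add: divide_right_mono)
      also have "\<dots> = sqrt (r n)" unfolding g_def using m1 rpos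
        by (simp add: field_simps)
      finally have mk: "measure_pmf.prob ?p {G. ?c G \<ge> g n} \<le> sqrt (r n)" by simp
      have "measure_pmf.prob ?p {G. \<not> ?c G \<le> g n} \<le> measure_pmf.prob ?p {G. ?c G \<ge> g n}"
        by (rule measure_pmf.finite_measure_mono) auto
      moreover have "measure_pmf.prob ?p {G. \<not> ?c G \<le> g n} = 1 - measure_pmf.prob ?p {G. ?c G \<le> g n}"
        using measure_pmf.prob_compl[of "{G. ?c G \<le> g n}" ?p] by (simp add: Compl_eq_Diff_UNIV[symmetric] Collect_neg_eq)
      ultimately show ?case using mk by linarith
    qed
    have upper: "eventually (\<lambda>n. measure_pmf.prob (ktree_process k n)
                  {G. real (non_moderate_count k f n (m n) G) \<le> g n} \<le> 1) sequentially"
      by simp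
    have "(\<lambda>n. 1 - sqrt (r n)) \<longlonglongrightarrow> 1 - 0" by (intro tendsto_diff tendsto_const sr0)
    then show "(\<lambda>n. measure_pmf.prob (ktree_process k n)
                  {G. real (non_moderate_count k f n (m n) G) \<le> g n}) \<longlonglongrightarrow> 1"
      using tendsto_sandwich[OF lower upper] by simp
  qed
qed



end
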